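(* Let $r_0,g_0,g_\infty\in\mathbb C$ and let $G(t,z)$ be the EGF of the GKP triangle $\left[\begin{array}{cc|c}-r_0,&1&g_0\\ 0,&-1&g_\infty\end{array}\right]$ (i.e. the case $r_\infty=1$, $r_1=-r_0$, $g_1=-g_0-g_\infty$ of the new parametrization). If $r_0\neq0$ then near $(0,0)$ $$G(t,z)=\bigl[(1+r_0z)^{1/r_0}\bigr]^{g_0}\bigl[(1-t)+t(1+r_0z)^{1/r_0}\bigr]^{g_\infty}=\bigl[t+(1-t)(1+r_0z)^{-1/r_0}\bigr]^{-g_0}\bigl[(1-t)+t(1+r_0z)^{1/r_0}\bigr]^{-g_1},$$ and if $r_0=0$ then $G(t,z)=e^{g_0z}\,[(1-t)+te^z]^{g_\infty}$. (Principal branches, equal to $1$ at $z=0$.)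
   Context: GKP triangle: for complex parameters $\alpha,\beta,\gamma,\alpha',\beta',\gamma'$, the array $T_{n,k}=\left[\begin{array}{cc|c}\alpha,&\beta&\gamma\\ \alpha',&\beta'&\gamma'\end{array}\right]_{n,k}$ is defined by $T_{0,0}=1$, $T_{n,k}=0$ if $n<0$, $k<0$ or $k>n$, and $T_{n+1,k+1}=[\alpha n+\beta(k+1)+\gamma]T_{n,k+1}+[\alpha' n+\beta' k+\gamma']T_{n,k}$ for $n\ge0$, $k\in\mathbb Z$; its EGF is $G(t,z)=\sum_{n\ge0}\sum_{k=0}^nT_{n,k}t^kz^n/n!$. *)

theory Defs
  imports "HOL-Analysis.Analysis"
begin

text \<open>GKP triangle T n k for parameters a b c a' b' c' (alpha, beta, gamma, alpha', beta', gamma').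
  T 0 k = [k = 0]; T (n+1) K = (a n + b K + c) T n K + (a' n + b' (K-1) + c') T n (K-1)
  for all integers K.  This recurrence (with T n k = 0 for k < 0 or k > n, which it forces)
  is exactly the defining recurrence with K = k+1.\<close>
primrec gkp :: "complex \<Rightarrow> complex \<Rightarrow> complex \<Rightarrow> complex \<Rightarrow> complex \<Rightarrow> complex \<Rightarrow> nat \<Rightarrow> int \<Rightarrow> complex" where
  "gkp a b c a' b' c' 0 k = (if k = 0 then 1 else 0)"
| "gkp a b c a' b' c' (Suc n) k =
     (if k < 0 \<or> k > int n + 1 then 0 else
      (a * of_nat n + b * of_int k + c) * gkp a b c a' b' c' n k
      + (a' * of_nat n + b' * of_int (k - 1) + c') * gkp a b c a' b' c' n (k - 1))"

definition gkp_egf_term :: "complex \<Rightarrow> complex \<Rightarrow> complex \<Rightarrow> complex \<Rightarrow> complex \<Rightarrow> complex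
    \<Rightarrow> complex \<Rightarrow> complex \<Rightarrow> nat \<Rightarrow> complex" where
  "gkp_egf_term a b c a' b' c' t z n =
     (\<Sum>k=0..n. gkp a b c a' b' c' n (int k) * t ^ k) * z ^ n / of_nat (fact n)"

end

theory Submission imports Defs "HOL-Complex_Analysis.Complex_Analysis" begin

lemma gkp_zero: "k < 0 \<or> k > int n \<Longrightarrow> gkp a b c a' b' c' n k = 0"
  by (cases n) auto

lemma gkp_rec_sum:
  fixes r0 g0 ginf x :: complex
  shows "(\<Sum>k=0..Suc n. gkp (-r0) 1 g0 0 (-1) ginf (Suc n) (int k) * x^k)
     = (\<Sum>k=0..n. gkp (-r0) 1 g0 0 (-1) ginf n (int k) *
          ((g0 - r0 * of_nat n + of_nat k) * x^k + (ginf - of_nat k) * x^(k+1)))"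
proof -
  let ?T = "gkp (-r0) 1 g0 0 (-1) ginf n"
  have "(\<Sum>k=0..Suc n. gkp (-r0) 1 g0 0 (-1) ginf (Suc n) (int k) * x^k)
     = (\<Sum>k=0..Suc n. (g0 - r0 * of_nat n + of_nat k) * ?T (int k) * x^k)
       + (\<Sum>k=0..Suc n. (ginf - of_int (int k - 1)) * ?T (int k - 1) * x^k)"
    by (simp add: sum.distrib[symmetric] algebra_simps)
  also have "(\<Sum>k=0..Suc n. (g0 - r0 * of_nat n + of_nat k) * ?T (int k) * x^k)
      = (\<Sum>k=0..n. (g0 - r0 * of_nat n + of_nat k) * ?T (int k) * x^k)"
    by (simp add: gkp_zero)
  also have "(\<Sum>k=0..Suc n. (ginf - of_int (int k - 1)) * ?T (int k - 1) * x^k)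
      = (\<Sum>k=0..n. (ginf - of_nat k) * ?T (int k) * x^(k+1))"
    by (subst sum.atLeast0_atMost_Suc_shift) (simp add: gkp_zero)
  finally show ?thesis
    by (simp add: sum.distrib[symmetric] algebra_simps)
qed


lemma taylor_main:
  fixes l :: "complex \<Rightarrow> complex" and r0 g0 ginf t w :: complex and e :: real
  assumes dl: "\<And>z. z \<in> ball 0 e \<Longrightarrow> (l has_field_derivative 1/(1+r0*z)) (at z)"
   and pnz: "\<And>z. z \<in> ball 0 e \<Longrightarrow> 1 + r0*z \<noteq> 0"
   and Rep: "\<And>z. z \<in> ball 0 e \<Longrightarrow> 0 < Re (1 - t + t*exp(l z))"
   and l0: "l 0 = 0" and w: "w \<in> ball 0 e"
  shows "gkp_egf_term (-r0) 1 g0 0 (-1) ginf t w sums exp(g0*l w + ginf * Ln(1 - t + t*exp(l w)))"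
proof -
  define W where "W z = 1 - t + t*exp(l z)" for z
  define F where "F z = exp(g0*l z + ginf*Ln(W z))" for z
  define S where "S z = t*exp(l z)/W z" for z
  define P where "P z = 1 + r0*z" for z
  define T where "T n k = gkp (-r0) 1 g0 0 (-1) ginf n (int k)" for n k
  define \<Phi> where "\<Phi> n z = (\<Sum>k=0..n. T n k * (F z * S z^k / P z^n))" for n z
  have dl': "(l has_field_derivative 1/P z) (at z)" if "z \<in> ball 0 e" for z
    using dl[OF that] unfolding P_def .
  have Pnz: "P z \<noteq> 0" if "z \<in> ball 0 e" for z
    using pnz[OF that] unfolding P_def .
  have Wnz: "W z \<noteq> 0" if "z \<in> ball 0 e" for z
    using Rep[OF that] unfolding W_def by (metis less_irrefl zero_complex.sel(1))
  have dW: "(W has_field_derivative t*exp(l z)/P z) (at z)" if "z \<in> ball 0 e" for z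
    unfolding W_def P_def
    by (rule derivative_eq_intros dl[OF that] | simp)+
  have dF: "(F has_field_derivative F z * (g0 + ginf * S z) / P z) (at z)" if z: "z \<in> ball 0 e" for z
  proof -
    have nr: "W z \<notin> \<real>\<^sub>\<le>\<^sub>0" using Rep[OF z] unfolding W_def
      by (auto simp: complex_nonpos_Reals_iff)
    have "((\<lambda>z. g0*l z + ginf*Ln(W z)) has_field_derivative g0 * (1/P z) + ginf * (inverse (W z) * (t*exp(l z)/P z))) (at z)"
      by (intro DERIV_add DERIV_cmult DERIV_chain2[OF has_field_derivative_Ln[OF nr] dW[OF z]] dl'[OF z])
    from DERIV_chain2[OF DERIV_exp this] show ?thesis
      unfolding F_def
      by (rule DERIV_cong) (use Wnz[OF z] Pnz[OF z] in \<open>simp add: S_def field_simps\<close>)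
  qed
  have dS: "(S has_field_derivative S z * (1 - S z) / P z) (at z)" if z: "z \<in> ball 0 e" for z
  proof -
    have "((\<lambda>z. t*exp(l z) / W z) has_field_derivative ((t * (exp (l z) * (1/P z))) * W z - t*exp(l z) * (t*exp(l z)/P z)) / (W z * W z)) (at z)"
      by (intro DERIV_divide DERIV_cmult DERIV_chain2[OF DERIV_exp dl'[OF z]] dW[OF z] Wnz[OF z])
    then show ?thesis unfolding S_def[abs_def]
      by (rule DERIV_cong) (use Wnz[OF z] Pnz[OF z] in \<open>simp add: field_simps\<close>)
  qed
  have dP: "(P has_field_derivative r0) (at z)" for z
    unfolding P_def by (rule derivative_eq_intros | simp)+
  have dterm: "((\<lambda>z. F z * S z^k / P z^n) has_field_derivative
      F z / P z^(Suc n) * ((g0 - r0 * of_nat n + of_nat k) * S z^k + (ginf - of_nat k) * S z^(k+1))) (at z)"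
    if z: "z \<in> ball 0 e" for z n k
  proof -
    have D: "((\<lambda>z. F z * S z^k / P z^n) has_field_derivative
      (((F z * (g0 + ginf * S z) / P z) * S z^k + (of_nat k * (S z * (1 - S z) / P z * S z^(k - Suc 0))) * F z) * P z^n
       - F z * S z^k * (of_nat n * (r0 * P z^(n - Suc 0)))) / (P z^n * P z^n)) (at z)"
      by (intro DERIV_divide DERIV_mult DERIV_power dF[OF z] dS[OF z] dP) (simp add: Pnz[OF z])
    have A: "of_nat k * (S z * (1 - S z) / P z * S z^(k - Suc 0)) = of_nat k * S z^k * (1 - S z) / P z"
      by (cases k) (simp_all add: field_simps)
    have B: "of_nat n * (r0 * P z^(n - Suc 0)) = of_nat n * P z^n * r0 / P z"
      using Pnz[OF z] by (cases n) (simp_all add: field_simps)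
    show ?thesis
      using D unfolding A B by (rule DERIV_cong) (use Pnz[OF z] in \<open>simp add: field_simps power2_eq_square\<close>)
  qed
  have dPhi: "(\<Phi> n has_field_derivative \<Phi> (Suc n) z) (at z)" if z: "z \<in> ball 0 e" for z n
  proof -
    define X where "X k = (g0 - r0 * of_nat n + of_nat k) * S z^k + (ginf - of_nat k) * S z^(k+1)" for k
    have fe: "\<Phi> n = (\<lambda>z. \<Sum>k=0..n. T n k * (F z * S z^k / P z^n))"
      by (simp add: fun_eq_iff \<Phi>_def)
    have D: "((\<lambda>z. \<Sum>k=0..n. T n k * (F z * S z^k / P z^n)) has_field_derivative
         (\<Sum>k=0..n. T n k * (F z / P z^(Suc n) * X k))) (at z)"
      unfolding X_def by (intro DERIV_sum DERIV_cmult dterm[OF z])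
    have "(\<Sum>k=0..n. T n k * (F z / P z^(Suc n) * X k)) = F z / P z^(Suc n) * (\<Sum>k=0..n. T n k * X k)"
      by (simp add: sum_distrib_left algebra_simps)
    also have "(\<Sum>k=0..n. T n k * X k) = (\<Sum>k=0..Suc n. T (Suc n) k * S z^k)"
      using gkp_rec_sum[of r0 g0 ginf n "S z"] by (simp add: T_def X_def)
    also have "F z / P z^(Suc n) * (\<Sum>k=0..Suc n. T (Suc n) k * S z^k) = \<Phi> (Suc n) z"
      by (simp add: \<Phi>_def sum_distrib_left algebra_simps)
    finally show ?thesis using D unfolding fe by simp
  qed
  have iter: "\<forall>z\<in>ball 0 e. (deriv^^n) F z = \<Phi> n z" for n
  proof (induction n)
    case 0
    then show ?case by (simp add: \<Phi>_def T_def)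
  next
    case (Suc n)
    show ?case
    proof
      fix z :: complex assume z: "z \<in> ball 0 e"
      have ev: "eventually (\<lambda>y. y \<in> ball 0 e) (nhds z)"
        using z by (intro eventually_nhds_in_open) auto
      have "(deriv^^Suc n) F z = deriv ((deriv^^n) F) z" by simp
      also have "\<dots> = deriv (\<Phi> n) z"
        by (rule deriv_cong_ev) (use ev Suc.IH in \<open>auto elim!: eventually_mono\<close>)
      also have "\<dots> = \<Phi> (Suc n) z"
        by (rule DERIV_imp_deriv[OF dPhi[OF z]])
      finally show "(deriv^^Suc n) F z = \<Phi> (Suc n) z" .
    qed
  qed
  have hol: "F holomorphic_on ball 0 e"
    by (subst holomorphic_on_open) (auto intro: dF)
  have e0: "0 \<in> ball (0::complex) e" using w norm_ge_zero[of w] by (simp del: norm_ge_zero)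
  have F0: "F 0 = 1" by (simp add: F_def W_def l0)
  have S0: "S 0 = t" by (simp add: S_def W_def l0)
  have P0: "P 0 = 1" by (simp add: P_def)
  have "(\<lambda>n. (deriv ^^ n) F 0 / fact n * (w - 0)^n) sums F w"
    by (rule holomorphic_power_series[OF hol w])
  moreover have "(deriv ^^ n) F 0 / fact n * (w - 0)^n = gkp_egf_term (-r0) 1 g0 0 (-1) ginf t w n" for n
    using iter[of n] e0 by (simp add: \<Phi>_def F0 S0 P0 T_def gkp_egf_term_def)
  ultimately show ?thesis by (simp add: F_def W_def)
qed

lemma Re_pos:
  fixes t l :: complex
  assumes t: "norm t < 1/4" and l: "norm l \<le> 1"
  shows "0 < Re (1 - t + t * exp l)"
proof -
  have "norm (exp l) \<le> exp (norm l)" by (rule norm_exp)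
  also have "\<dots> \<le> exp 1" using l by simp
  also have "\<dots> \<le> 3" by (rule exp_le)
  finally have "norm (exp l - 1) \<le> 4"
    using norm_triangle_ineq4[of "exp l" 1] by simp
  then have "norm (t * (exp l - 1)) < 1"
  proof -
    have "norm t * norm (exp l - 1) \<le> norm t * 4"
      by (rule mult_left_mono[OF \<open>norm (exp l - 1) \<le> 4\<close> norm_ge_zero])
    then show ?thesis using t by (simp add: norm_mult)
  qed
  then have "\<bar>Re (t * (exp l - 1))\<bar> < 1"
    using abs_Re_le_cmod le_less_trans by blast
  then show ?thesis by (simp add: algebra_simps)
qed

lemma Re_pos_nz: "0 < Re (x::complex) \<Longrightarrow> x \<noteq> 0"
  by auto

theorem mainTheorem4:
  fixes r0 g0 ginf :: complex
  defines "g1 \<equiv> - g0 - ginf"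
  shows "(r0 \<noteq> 0 \<longrightarrow>
           (\<exists>\<epsilon>>0. \<forall>t z. norm t < \<epsilon> \<and> norm z < \<epsilon> \<longrightarrow>
              gkp_egf_term (- r0) 1 g0 0 (- 1) ginf t z sums
                (((1 + r0 * z) powr (1 / r0)) powr g0
                 * ((1 - t) + t * (1 + r0 * z) powr (1 / r0)) powr ginf)
            \<and> ((1 + r0 * z) powr (1 / r0)) powr g0
                 * ((1 - t) + t * (1 + r0 * z) powr (1 / r0)) powr ginf
              = (t + (1 - t) * (1 + r0 * z) powr (- 1 / r0)) powr (- g0)
                 * ((1 - t) + t * (1 + r0 * z) powr (1 / r0)) powr (- g1)))
       \<and> (r0 = 0 \<longrightarrow>
           (\<exists>\<epsilon>>0. \<forall>t z. norm t < \<epsilon> \<and> norm z < \<epsilon> \<longrightarrow>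
              gkp_egf_term (- r0) 1 g0 0 (- 1) ginf t z sums
                (exp (g0 * z) * ((1 - t) + t * exp z) powr ginf)))"
proof (intro conjI impI)
  assume r0: "r0 = 0"
  show "\<exists>\<epsilon>>0. \<forall>t z. norm t < \<epsilon> \<and> norm z < \<epsilon> \<longrightarrow>
              gkp_egf_term (- r0) 1 g0 0 (- 1) ginf t z sums
                (exp (g0 * z) * ((1 - t) + t * exp z) powr ginf)"
  proof (intro exI[of _ "1/4"] conjI allI impI)
    fix t z :: complex
    assume tz: "norm t < 1/4 \<and> norm z < 1/4"
    have Rp: "0 < Re (1 - t + t * exp y)" if "y \<in> ball 0 (1/4)" for y
      using that tz by (intro Re_pos) auto
    have "gkp_egf_term (-r0) 1 g0 0 (-1) ginf t z sums exp(g0*z + ginf * Ln(1 - t + t*exp z))"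
      by (rule taylor_main[where l="\<lambda>z. z" and e="1/4"]) (use Rp tz r0 in auto)
    moreover have "1 - t + t * exp z \<noteq> 0" using Rp[of z] tz by (intro Re_pos_nz) auto
    ultimately show "gkp_egf_term (- r0) 1 g0 0 (- 1) ginf t z sums
                (exp (g0 * z) * ((1 - t) + t * exp z) powr ginf)"
      by (simp add: powr_def exp_add mult.commute)
  qed simp
next
  assume r0: "r0 \<noteq> 0"
  define e where "e = min (1/4) (1 / (2 * norm r0))"
  have e0: "e > 0" using r0 by (simp add: e_def)
  show "\<exists>\<epsilon>>0. \<forall>t z. norm t < \<epsilon> \<and> norm z < \<epsilon> \<longrightarrow>
              gkp_egf_term (- r0) 1 g0 0 (- 1) ginf t z sums
                (((1 + r0 * z) powr (1 / r0)) powr g0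
                 * ((1 - t) + t * (1 + r0 * z) powr (1 / r0)) powr ginf)
            \<and> ((1 + r0 * z) powr (1 / r0)) powr g0
                 * ((1 - t) + t * (1 + r0 * z) powr (1 / r0)) powr ginf
              = (t + (1 - t) * (1 + r0 * z) powr (- 1 / r0)) powr (- g0)
                 * ((1 - t) + t * (1 + r0 * z) powr (1 / r0)) powr (- g1)"
  proof (intro exI[of _ e] conjI allI impI e0)
    fix t z :: complex
    assume tz: "norm t < e \<and> norm z < e"
    define l where "l y = Ln (1 + r0 * y) / r0" for y
    have small: "norm (r0 * y) < 1/2" if "y \<in> ball 0 e" for y
    proof -
      have "norm y < 1 / (2 * norm r0)" using that by (simp add: e_def)
      then show ?thesis using r0 by (simp add: norm_mult field_simps)
    qed
    have lb: "norm (l y) \<le> 1/2" if "y \<in> ball 0 e" for y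
    proof -
      have "norm (Ln (1 + r0 * y)) \<le> 2 * norm (r0 * y)" by (rule norm_Ln_le[OF small[OF that]])
      then have "norm (l y) \<le> 2 * norm y" using r0 by (simp add: l_def norm_mult norm_divide field_simps)
      moreover have "norm y < 1/4" using that by (simp add: e_def)
      ultimately show ?thesis by simp
    qed
    have Rep1: "0 < Re (1 + r0 * y)" if "y \<in> ball 0 e" for y
    proof -
      have "\<bar>Re (r0 * y)\<bar> < 1/2" using small[OF that] abs_Re_le_cmod le_less_trans by blast
      moreover have "Re (1 + r0*y) = 1 + Re (r0*y)" by (simp only: plus_complex.sel one_complex.sel)
      ultimately show ?thesis by linarith
    qed
    have Rp: "0 < Re (1 - t + t * exp (l y))" if "y \<in> ball 0 e" for y
      using that tz lb[OF that] by (intro Re_pos) (auto simp: e_def)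
    have dl: "(l has_field_derivative 1/(1+r0*y)) (at y)" if y: "y \<in> ball 0 e" for y
    proof -
      have nz: "1 + r0 * y \<noteq> 0" using Rep1[OF y] by (rule Re_pos_nz)
      have nr: "1 + r0 * y \<notin> \<real>\<^sub>\<le>\<^sub>0" using Rep1[OF y] by (auto simp: complex_nonpos_Reals_iff)
      have dg: "((\<lambda>y. 1 + r0*y) has_field_derivative r0) (at y)"
        by (rule derivative_eq_intros | simp)+
      have "((\<lambda>y. Ln (1 + r0 * y) / r0) has_field_derivative (inverse (1 + r0*y) * r0) / r0) (at y)"
        by (intro DERIV_cdivide DERIV_chain2[OF has_field_derivative_Ln[OF nr] dg])
      then show ?thesis unfolding l_def[abs_def] by (rule DERIV_cong) (use r0 nz in \<open>simp add: divide_inverse\<close>)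
    qed
    have z: "z \<in> ball 0 e" using tz by simp
    have S: "gkp_egf_term (-r0) 1 g0 0 (-1) ginf t z sums exp(g0 * l z + ginf * Ln(1 - t + t*exp (l z)))"
    proof -
      have pn: "\<And>y. y \<in> ball 0 e \<Longrightarrow> 1 + r0*y \<noteq> 0" using Rep1 Re_pos_nz by blast
      have l0: "l 0 = 0" by (simp add: l_def)
      show ?thesis by (rule taylor_main[OF dl pn Rp l0 z])
    qed
    define W where "W = 1 - t + t * exp (l z)"
    have Wp: "0 < Re W" using Rp[OF z] by (simp add: W_def)
    have nz1: "1 + r0 * z \<noteq> 0" using Rep1[OF z] by (rule Re_pos_nz)
    have u: "(1 + r0 * z) powr (1 / r0) = exp (l z)"
      using nz1 by (simp add: powr_def l_def)
    have um: "(1 + r0 * z) powr (- 1 / r0) = exp (- l z)"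
      using nz1 by (simp add: powr_def l_def)
    have Iml: "\<bar>Im (l z)\<bar> \<le> 1/2" using lb[OF z] abs_Im_le_cmod order_trans by blast
    have Ll: "Ln (exp (l z)) = l z"
      using Iml pi_gt3 by (intro Ln_exp) auto
    have W1: "(1 - t) + t * exp (l z) = W" by (simp add: W_def)
    have WnZ: "W \<noteq> 0" using Wp by (rule Re_pos_nz)
    have ImW: "\<bar>Im (Ln W)\<bar> < pi/2" by (rule Re_Ln_pos_lt_imp[OF Wp])
    have L2: "Ln (exp (Ln W - l z)) = Ln W - l z"
      using ImW Iml pi_gt3 by (intro Ln_exp) auto
    have E2: "t + (1 - t) * exp (- l z) = exp (Ln W - l z)"
      using WnZ by (simp add: exp_diff W_def exp_minus field_simps)
    have lhs: "((1 + r0 * z) powr (1 / r0)) powr g0 * ((1 - t) + t * (1 + r0 * z) powr (1 / r0)) powr ginf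
        = exp(g0 * l z + ginf * Ln(1 - t + t*exp (l z)))"
    proof -
      have a: "(exp (l z)) powr g0 = exp (g0 * l z)"
        unfolding powr_def using Ll by simp
      have b: "W powr ginf = exp (ginf * Ln W)" using WnZ by (simp add: powr_def)
      show ?thesis unfolding u W1 a b by (simp add: exp_add W_def)
    qed
    show "gkp_egf_term (- r0) 1 g0 0 (- 1) ginf t z sums
                (((1 + r0 * z) powr (1 / r0)) powr g0
                 * ((1 - t) + t * (1 + r0 * z) powr (1 / r0)) powr ginf)"
      unfolding lhs by (rule S)
    show "((1 + r0 * z) powr (1 / r0)) powr g0
                 * ((1 - t) + t * (1 + r0 * z) powr (1 / r0)) powr ginf
              = (t + (1 - t) * (1 + r0 * z) powr (- 1 / r0)) powr (- g0)
                 * ((1 - t) + t * (1 + r0 * z) powr (1 / r0)) powr (- g1)"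
    proof -
      have c: "(t + (1 - t) * (1 + r0 * z) powr (- 1 / r0)) powr (- g0) = exp(-g0*(Ln W - l z))"
        unfolding um E2 using L2 by (simp add: powr_def)
      have d: "((1 - t) + t * (1 + r0 * z) powr (1 / r0)) powr (- g1) = exp(-g1 * Ln W)"
        unfolding u W1 using WnZ by (simp add: powr_def)
      have e: "1 - t + t * exp (l z) = W" by (simp add: W_def)
      show ?thesis unfolding lhs c d e
        by (subst exp_add[symmetric]) (simp add: g1_def algebra_simps)
    qed
  qed
qed

end
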